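(* Let $d$ be a positive integer, $b\geqslant5$ an integer, $a>0$ real with $\zeta=\log_b a\notin\mathbb{Q}$. Define $f:\mathbb{T}^d\to\mathbb{T}^d$ by $f(x)_i=\{\zeta+\sum_{j=1}^{i}\binom{i}{j}x_j\}$, $i=1,\dots,d$, and for $t\in\{1,\dots,b-1\}$ let $U_t=\{x\in\mathbb{T}^d:\log_b t\leqslant x_d<\log_b(t+1)\}$. For $x,y\in\mathbb{T}^d$ write $x\sim_k y$ if for every $i\in\{0,\dots,k-1\}$ there is $t$ such that $f^i(x)$ and $f^i(y)$ both lie in the closure of $U_t$, and $x\sim y$ if $x\sim_k y$ for all $k\in\mathbb{N}_{>0}$. Let $M$ be the $d\times d$ matrix with $M_{ij}=\binom{i}{j}$ for $j\leqslant i$ and $0$ otherwise, and call $r\in\mathbb{R}^d$ stable if the last coordinate of $M^k r$ is an integer for every $k\in\mathbb{N}_{>0}$. If $x,y\in\mathbb{T}^d$ are such that $y-x$ is not stable, then $x\not\sim y$.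
   Context: $\mathbb{T}^d=\mathbb{R}^d/\mathbb{Z}^d$ identified with $[0,1)^d$; $\{y\}$ is the fractional part. Since $M$ is an integer matrix, every vector in $\mathbb{Z}^d$ is stable and stability of $y-x$ is well defined for $x,y\in\mathbb{T}^d$ (taking any lift to $\mathbb{R}^d$). *)

theory Defs
  imports Complex_Main
begin

text \<open>Points of the torus T^d are represented as functions nat => real whose
coordinates 1..d lie in [0,1) and which vanish outside {1..d}.\<close>

definition torus :: "nat \<Rightarrow> (nat \<Rightarrow> real) set" where
  "torus d = {x. (\<forall>i\<in>{1..d}. 0 \<le> x i \<and> x i < 1) \<and> (\<forall>i. i \<notin> {1..d} \<longrightarrow> x i = 0)}"

definition torus_closure :: "nat \<Rightarrow> (nat \<Rightarrow> real) set \<Rightarrow> (nat \<Rightarrow> real) set" where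
  "torus_closure d U = {x \<in> torus d. \<forall>e>0. \<exists>u\<in>U.
      \<forall>i\<in>{1..d}. \<exists>m::int. \<bar>x i - u i - of_int m\<bar> < e}"

definition fmap :: "real \<Rightarrow> nat \<Rightarrow> (nat \<Rightarrow> real) \<Rightarrow> (nat \<Rightarrow> real)" where
  "fmap \<zeta> d x = (\<lambda>i. if i \<in> {1..d} then frac (\<zeta> + (\<Sum>j=1..i. real (i choose j) * x j)) else 0)"

definition Uset :: "nat \<Rightarrow> nat \<Rightarrow> nat \<Rightarrow> (nat \<Rightarrow> real) set" where
  "Uset b d t = {x \<in> torus d. log (real b) (real t) \<le> x d \<and> x d < log (real b) (real t + 1)}"

definition sim_k :: "nat \<Rightarrow> real \<Rightarrow> nat \<Rightarrow> nat \<Rightarrow> (nat \<Rightarrow> real) \<Rightarrow> (nat \<Rightarrow> real) \<Rightarrow> bool" where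
  "sim_k b \<zeta> d k x y = (\<forall>i<k. \<exists>t\<in>{1..b-1}.
      (fmap \<zeta> d ^^ i) x \<in> torus_closure d (Uset b d t) \<and>
      (fmap \<zeta> d ^^ i) y \<in> torus_closure d (Uset b d t))"

definition sim :: "nat \<Rightarrow> real \<Rightarrow> nat \<Rightarrow> (nat \<Rightarrow> real) \<Rightarrow> (nat \<Rightarrow> real) \<Rightarrow> bool" where
  "sim b \<zeta> d x y = (\<forall>k>0. sim_k b \<zeta> d k x y)"

definition Mmul :: "nat \<Rightarrow> (nat \<Rightarrow> real) \<Rightarrow> (nat \<Rightarrow> real)" where
  "Mmul d r = (\<lambda>i. if i \<in> {1..d} then (\<Sum>j=1..i. real (i choose j) * r j) else 0)"

definition stable :: "nat \<Rightarrow> (nat \<Rightarrow> real) \<Rightarrow> bool" where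
  "stable d r = (\<forall>k>0. (Mmul d ^^ k) r d \<in> \<int>)"

end

theory Submission
  imports Defs "HOL-Analysis.Analysis"
begin


definition pf :: "(nat \<Rightarrow> real) \<Rightarrow> nat \<Rightarrow> real \<Rightarrow> real" where
  "pf c n x = (\<Sum>j\<le>n. c j * x ^ j)"

lemma sum_if_ge: "(\<Sum>j\<le>n. (if i \<le> j then g j else 0)) = (\<Sum>j=i..n. g j)" for g :: "nat \<Rightarrow> 'a::comm_monoid_add"
proof -
  have "(\<Sum>j\<le>n. (if i \<le> j then g j else 0)) = (\<Sum>j\<in>{..n} \<inter> {j. i \<le> j}. g j)"
    by (simp add: sum.inter_restrict)
  also have "{..n} \<inter> {j. i \<le> j} = {i..n}" by auto
  finally show ?thesis .
qed

lemma pf_affine: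
  "pf c n (a + s * x) = pf (\<lambda>i. \<Sum>j=i..n. c j * real (j choose i) * a ^ (j - i) * s ^ i) n x"
proof -
  have "pf c n (a + s * x) = (\<Sum>j\<le>n. c j * (\<Sum>i\<le>j. real (j choose i) * (s*x)^i * a^(j-i)))"
    unfolding pf_def add.commute[of a "s*x"] binomial_ring by simp
  also have "\<dots> = (\<Sum>j\<le>n. \<Sum>i\<le>n. (if i \<le> j then c j * real (j choose i) * a^(j-i) * s^i * x^i else 0))"
  proof (rule sum.cong[OF refl])
    fix j assume "j \<in> {..n}"
    hence "(\<Sum>i\<le>n. (if i \<le> j then c j * real (j choose i) * a^(j-i) * s^i * x^i else 0))
        = (\<Sum>i\<in>{..n} \<inter> {i. i \<le> j}. c j * real (j choose i) * a^(j-i) * s^i * x^i)"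
      by (simp add: sum.inter_restrict)
    also have "{..n} \<inter> {i. i \<le> j} = {..j}" using \<open>j \<in> {..n}\<close> by auto
    finally show "c j * (\<Sum>i\<le>j. real (j choose i) * (s*x)^i * a^(j-i)) = (\<Sum>i\<le>n. (if i \<le> j then c j * real (j choose i) * a^(j-i) * s^i * x^i else 0))"
      by (simp add: sum_distrib_left power_mult_distrib mult_ac)
  qed
  also have "\<dots> = (\<Sum>i\<le>n. \<Sum>j\<le>n. (if i \<le> j then c j * real (j choose i) * a^(j-i) * s^i * x^i else 0))"
    by (rule sum.swap)
  also have "\<dots> = (\<Sum>i\<le>n. (\<Sum>j=i..n. c j * real (j choose i) * a ^ (j - i) * s ^ i) * x^i)"
    by (simp add: sum_if_ge sum_distrib_right)
  finally show ?thesis unfolding pf_def .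
qed

lemma pf_Suc: "pf c (Suc n) x = pf c n x + c (Suc n) * x ^ Suc n"
  by (simp add: pf_def)

lemma pf_top0: "c (Suc n) = 0 \<Longrightarrow> pf c (Suc n) x = pf c n x"
  by (simp add: pf_Suc)

lemma pf_smult: "pf (\<lambda>i. h * c i) n x = h * pf c n x"
  by (simp add: pf_def sum_distrib_left mult_ac)

definition dcoef :: "(nat \<Rightarrow> real) \<Rightarrow> nat \<Rightarrow> real \<Rightarrow> nat \<Rightarrow> real" where
  "dcoef c n h i = (\<Sum>j=i..n. c j * real (j choose i) * h ^ (j - i)) - c i"

lemma pf_diff:
  "pf c (Suc n) (x + h) - pf c (Suc n) x = pf (dcoef c (Suc n) h) n x"
proof -
  have "pf c (Suc n) (x + h) = pf (\<lambda>i. \<Sum>j=i..Suc n. c j * real (j choose i) * h ^ (j - i) * 1 ^ i) (Suc n) x"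
    using pf_affine[of c "Suc n" h 1 x] by (simp add: add.commute)
  hence "pf c (Suc n) (x + h) - pf c (Suc n) x = pf (dcoef c (Suc n) h) (Suc n) x"
    by (simp add: pf_def dcoef_def sum_subtractf algebra_simps)
  also have "\<dots> = pf (dcoef c (Suc n) h) n x"
    by (rule pf_top0) (simp add: dcoef_def)
  finally show ?thesis .
qed

lemma dcoef_top: "dcoef c (Suc n) h n = c (Suc n) * real (Suc n) * h"
proof -
  have "{n..Suc n} = {n, Suc n}" by auto
  thus ?thesis by (simp add: dcoef_def)
qed



lemma sum_shift_bound:
  fixes w :: "nat \<Rightarrow> complex"
  assumes "\<And>m. norm (w m) \<le> 1"
  shows "norm ((\<Sum>m<K. w (m + a)) - (\<Sum>m<K. w m)) \<le> 2 * real a"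
proof (induction a)
  case 0 then show ?case by simp
next
  case (Suc a)
  have e1: "(\<Sum>m<Suc K. w (m + a)) = w a + (\<Sum>m<K. w (m + Suc a))"
    by (subst sum.lessThan_Suc_shift) simp
  have e2: "(\<Sum>m<Suc K. w (m + a)) = (\<Sum>m<K. w (m + a)) + w (K + a)"
    by simp
  have "(\<Sum>m<K. w (m + Suc a)) - (\<Sum>m<K. w m) = ((\<Sum>m<K. w (m + a)) - (\<Sum>m<K. w m)) + (w (K + a) - w a)"
    using e1 e2 by (simp add: algebra_simps)
  also have "norm \<dots> \<le> 2 * real a + (norm (w (K+a)) + norm (w a))"
    by (rule order_trans[OF norm_triangle_ineq add_mono[OF Suc norm_triangle_ineq4]])
  also have "\<dots> \<le> 2 * real (Suc a)" using assms[of "K+a"] assms[of a] by simp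
  finally show ?case .
qed

lemma bounded_div_tendsto0:
  fixes s :: "nat \<Rightarrow> complex"
  assumes "\<And>K. norm (s K) \<le> B"
  shows "(\<lambda>K. s K / of_nat K) \<longlonglongrightarrow> 0"
proof (rule Lim_null_comparison)
  show "\<forall>\<^sub>F K in sequentially. norm (s K / of_nat K) \<le> B / real K"
    using assms by (auto simp: norm_divide divide_right_mono)
  show "(\<lambda>K. B / real K) \<longlonglongrightarrow> 0"
    by (rule tendsto_divide_0[OF tendsto_const]) (rule filterlim_at_top_imp_at_infinity[OF filterlim_real_sequentially])
qed

lemma vdc:
  fixes u :: "nat \<Rightarrow> complex"
  assumes nu: "\<And>m. norm (u m) \<le> 1"
  and hyp: "\<And>h. h > 0 \<Longrightarrow> (\<lambda>K. (\<Sum>m<K. u (m+h) * cnj (u m)) / of_nat K) \<longlonglongrightarrow> 0"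
  shows "(\<lambda>K. (\<Sum>m<K. u m) / of_nat K) \<longlonglongrightarrow> 0"
proof -
  define T where "T l l' K = (\<Sum>m<K. u (m+l) * cnj (u (m+l')))" for l l' K
  have Tlt: "(\<lambda>K. T l l' K / of_nat K) \<longlonglongrightarrow> 0" if "l' < l" for l l'
  proof -
    define h where "h = l - l'"
    define w where "w m = u (m + h) * cnj (u m)" for m
    have nw: "norm (w m) \<le> 1" for m
      using nu[of "m+h"] nu[of m] by (simp add: w_def norm_mult mult_le_one)
    have TT: "T l l' K = (\<Sum>m<K. w (m + l'))" for K
      unfolding T_def w_def h_def using that by (intro sum.cong) (auto simp: algebra_simps)
    have "(\<lambda>K. (\<Sum>m<K. w m) / of_nat K + ((\<Sum>m<K. w (m + l')) - (\<Sum>m<K. w m)) / of_nat K) \<longlonglongrightarrow> 0 + 0"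
    proof (rule tendsto_add)
      show "(\<lambda>K. (\<Sum>m<K. w m) / of_nat K) \<longlonglongrightarrow> 0"
        using hyp[of h] that unfolding w_def h_def by simp
      show "(\<lambda>K. ((\<Sum>m<K. w (m + l')) - (\<Sum>m<K. w m)) / of_nat K) \<longlonglongrightarrow> 0"
        by (rule bounded_div_tendsto0[where B="2 * real l'"]) (rule sum_shift_bound[OF nw])
    qed
    thus ?thesis by (simp add: TT add_divide_distrib[symmetric])
  qed
  have Tlim: "(\<lambda>K. T l l' K / of_nat K) \<longlonglongrightarrow> 0" if "l \<noteq> l'" for l l'
  proof (cases "l' < l")
    case True then show ?thesis by (rule Tlt)
  next
    case False
    hence "l < l'" using that by simp
    from tendsto_cnj[OF Tlt[OF this]]
    have "(\<lambda>K. cnj (T l' l K / of_nat K)) \<longlonglongrightarrow> 0" by simp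
    moreover have "cnj (T l' l K) = T l l' K" for K
      by (simp add: T_def cnj_sum mult.commute)
    ultimately show ?thesis by simp
  qed
  show ?thesis
  proof (rule LIMSEQ_I)
    fix \<epsilon> :: real assume ep: "\<epsilon> > 0"
    obtain H :: nat where H8: "8 / \<epsilon>\<^sup>2 < real H"
      using reals_Archimedean2 by blast
    have "0 < 8 / \<epsilon>\<^sup>2" using ep by simp
    hence H1: "H \<ge> 1" using H8 by linarith
    have H8': "8 \<le> \<epsilon>\<^sup>2 * real H" using H8 ep by (simp add: field_simps)
    have Hpos: "real H > 0" using H1 by simp
    have "\<forall>\<^sub>F K in sequentially. \<forall>p\<in>{..<H}\<times>{..<H}. fst p \<noteq> snd p \<longrightarrow> norm (T (fst p) (snd p) K / of_nat K) < 1 / (real H)\<^sup>2"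
    proof (rule eventually_ball_finite)
      show "finite ({..<H}\<times>{..<H})" by simp
      show "\<forall>p\<in>{..<H} \<times> {..<H}. \<forall>\<^sub>F K in sequentially. fst p \<noteq> snd p \<longrightarrow> norm (T (fst p) (snd p) K / of_nat K) < 1 / (real H)\<^sup>2"
      proof
        fix p assume "p \<in> {..<H} \<times> {..<H}"
        show "\<forall>\<^sub>F K in sequentially. fst p \<noteq> snd p \<longrightarrow> norm (T (fst p) (snd p) K / of_nat K) < 1 / (real H)\<^sup>2"
        proof (cases "fst p = snd p")
          case True then show ?thesis by simp
        next
          case False
          have "1 / (real H)\<^sup>2 > 0" using Hpos by simp
          from tendstoD[OF Tlim[OF False] this] show ?thesis
            by (auto elim: eventually_mono)
        qed
      qed
    qed
    then obtain K1 where K1: "\<And>K p. K \<ge> K1 \<Longrightarrow> p\<in>{..<H}\<times>{..<H} \<Longrightarrow> fst p \<noteq> snd p \<Longrightarrow> norm (T (fst p) (snd p) K / of_nat K) < 1 / (real H)\<^sup>2"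
      unfolding eventually_sequentially by blast
    obtain K2 :: nat where K2: "4 * real H / \<epsilon> < real K2" using reals_Archimedean2 by blast
    show "\<exists>no. \<forall>K\<ge>no. norm ((\<Sum>m<K. u m) / of_nat K - 0) < \<epsilon>"
    proof (intro exI allI impI)
      fix K assume KK: "K \<ge> max K1 (Suc K2)"
      have Kpos: "real K > 0" using KK by simp
      have KH: "4 * real H / \<epsilon> < real K" using KK K2 by simp
      define S where "S = (\<Sum>m<K. u m)"
      define B where "B m = (\<Sum>l<H. u (m+l))" for m
      define A where "A = (\<Sum>m<K. B m)"
      have i: "norm (of_nat H * S - A) \<le> 2 * (real H)\<^sup>2"
      proof -
        have "A = (\<Sum>l<H. \<Sum>m<K. u (m+l))" unfolding A_def B_def by (rule sum.swap)
        hence "of_nat H * S - A = (\<Sum>l<H. S - (\<Sum>m<K. u (m+l)))"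
          by (simp add: sum_subtractf)
        hence "norm (of_nat H * S - A) \<le> (\<Sum>l<H. norm (S - (\<Sum>m<K. u (m+l))))"
          by (simp add: norm_sum)
        also have "\<dots> \<le> (\<Sum>l<H. 2 * real H)"
        proof (rule sum_mono)
          fix l assume "l \<in> {..<H}"
          have "norm (S - (\<Sum>m<K. u (m+l))) = norm ((\<Sum>m<K. u (m+l)) - (\<Sum>m<K. u m))"
            unfolding S_def by (simp add: norm_minus_commute)
          also have "\<dots> \<le> 2 * real l" by (rule sum_shift_bound[OF nu])
          also have "\<dots> \<le> 2 * real H" using \<open>l \<in> {..<H}\<close> by simp
          finally show "norm (S - (\<Sum>m<K. u (m+l))) \<le> 2 * real H" .
        qed
        also have "\<dots> = 2 * (real H)\<^sup>2" by (simp add: power2_eq_square)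
        finally show ?thesis .
      qed
      have ii: "(norm A)\<^sup>2 \<le> real K * (\<Sum>m<K. (norm (B m))\<^sup>2)"
      proof -
        have "norm A \<le> (\<Sum>m<K. 1 * norm (B m))" unfolding A_def by (simp add: norm_sum)
        hence "(norm A)\<^sup>2 \<le> (\<Sum>m<K. 1 * norm (B m))\<^sup>2"
          by (simp add: power_mono)
        also have "\<dots> \<le> (\<Sum>m<K. 1\<^sup>2) * (\<Sum>m<K. (norm (B m))\<^sup>2)"
          by (rule Cauchy_Schwarz_ineq_sum)
        finally show ?thesis by simp
      qed
      have iii: "(\<Sum>m<K. (norm (B m))\<^sup>2) \<le> (real H + 1) * real K"
      proof -
        have "complex_of_real (\<Sum>m<K. (norm (B m))\<^sup>2) = (\<Sum>m<K. B m * cnj (B m))"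
          by (subst of_real_sum) (simp only: complex_norm_square)
        also have "\<dots> = (\<Sum>m<K. \<Sum>l<H. \<Sum>l'<H. u (m+l) * cnj (u (m+l')))"
          unfolding B_def by (simp add: cnj_sum sum_product)
        also have "\<dots> = (\<Sum>l<H. \<Sum>l'<H. T l l' K)"
          unfolding T_def by (simp add: sum.swap[of _ "{..<K}"])
        finally have eq: "complex_of_real (\<Sum>m<K. (norm (B m))\<^sup>2) = (\<Sum>l<H. \<Sum>l'<H. T l l' K)" .
        have nn: "0 \<le> (\<Sum>m<K. (norm (B m))\<^sup>2)" by (simp add: sum_nonneg)
        have "(\<Sum>m<K. (norm (B m))\<^sup>2) = norm (complex_of_real (\<Sum>m<K. (norm (B m))\<^sup>2))"
          by (simp only: norm_of_real abs_of_nonneg[OF nn])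
        also have "\<dots> \<le> (\<Sum>l<H. \<Sum>l'<H. norm (T l l' K))"
          unfolding eq by (rule order_trans[OF norm_sum sum_mono[OF norm_sum]])
        also have "\<dots> \<le> (\<Sum>l<H. \<Sum>l'<H. ((if l = l' then real K else 0) + real K / (real H)\<^sup>2))"
        proof (intro sum_mono)
          fix l l' assume ll: "l \<in> {..<H}" "l' \<in> {..<H}"
          show "norm (T l l' K) \<le> (if l = l' then real K else 0) + real K / (real H)\<^sup>2"
          proof (cases "l = l'")
            case True
            have "norm (T l l K) \<le> (\<Sum>m<K. norm (u (m+l) * cnj (u (m+l))))"
              unfolding T_def by (rule norm_sum)
            also have "\<dots> \<le> (\<Sum>m<K. 1)"
              by (intro sum_mono) (simp add: norm_mult mult_le_one nu)
            finally have "norm (T l l K) \<le> real K" by simp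
            thus ?thesis using True by (simp add: add_increasing2)
          next
            case False
            have "norm (T l l' K / of_nat K) < 1 / (real H)\<^sup>2"
              using K1[of K "(l,l')"] KK ll False by simp
            hence "norm (T l l' K) / real K < 1 / (real H)\<^sup>2" by (simp add: norm_divide)
            hence "norm (T l l' K) < real K / (real H)\<^sup>2" using Kpos by (simp add: field_simps)
            thus ?thesis using False by simp
          qed
        qed
        also have "\<dots> = real H * real K + real K"
          using Hpos by (simp add: sum.distrib power2_eq_square distrib_left)
        finally show ?thesis by (simp add: algebra_simps)
      qed
      define a where "a = norm A / real K"
      have a0: "a \<ge> 0" unfolding a_def using Kpos by simp
      have "(norm A)\<^sup>2 \<le> real K * ((real H + 1) * real K)"
        using ii iii Kpos by (meson mult_left_mono of_nat_0_le_iff order_trans)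
      hence "a\<^sup>2 \<le> real H + 1" unfolding a_def using Kpos
        by (simp add: power_divide field_simps power2_eq_square)
      also have "\<dots> \<le> (\<epsilon> * real H / 2)\<^sup>2"
      proof -
        have A: "8 * real H \<le> (\<epsilon>\<^sup>2 * real H) * real H"
          using H8' by (intro mult_right_mono) auto
        have B: "real H \<ge> 1" using H1 by simp
        have C: "(\<epsilon> * real H / 2)\<^sup>2 = (\<epsilon>\<^sup>2 * real H) * real H / 4"
          by (simp add: power2_eq_square)
        show ?thesis unfolding C using A B by linarith
      qed
      finally have a2: "a\<^sup>2 \<le> (\<epsilon> * real H / 2)\<^sup>2" .
      have aH: "a \<le> \<epsilon> * real H / 2"
        by (rule power2_le_imp_le[OF a2]) (use ep Hpos in simp)
      have "real H * norm S \<le> norm A + 2 * (real H)\<^sup>2"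
        using i norm_triangle_ineq2[of "of_nat H * S" A] by (simp add: norm_mult)
      hence nS: "norm S \<le> (norm A + 2 * (real H)\<^sup>2) / real H"
        using Hpos by (simp add: pos_le_divide_eq mult.commute)
      have eqq: "(norm A + 2 * (real H)\<^sup>2) / real H / real K = a / real H + 2 * real H / real K"
        using Hpos Kpos unfolding a_def by (simp add: add_divide_distrib power2_eq_square)
      have "norm S / real K \<le> a / real H + 2 * real H / real K"
        using divide_right_mono[OF nS, of "real K"] Kpos unfolding eqq by simp
      also have "\<dots> < \<epsilon>"
      proof -
        have "a / real H \<le> \<epsilon> / 2" using aH Hpos by (simp add: pos_divide_le_eq)
        moreover have "4 * real H < \<epsilon> * real K" using KH ep by (simp add: pos_divide_less_eq mult.commute)
        hence "2 * real H / real K < \<epsilon> / 2" using Kpos by (simp add: pos_divide_less_eq)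
        ultimately show ?thesis by linarith
      qed
      finally show "norm ((\<Sum>m<K. u m) / of_nat K - 0) < \<epsilon>"
        unfolding S_def by (simp add: norm_divide)
    qed
  qed
qed



definition ee :: "real \<Rightarrow> complex" where "ee t = cis (2 * pi * t)"

lemma ee_add: "ee (a + b) = ee a * ee b"
  by (simp add: ee_def cis_mult distrib_left)

lemma norm_ee [simp]: "norm (ee t) = 1" by (simp add: ee_def)

lemma ee_cnj: "ee a * cnj (ee b) = ee (a - b)"
  by (simp add: ee_def cis_cnj cis_mult right_diff_distrib)

lemma ee_pow: "ee t ^ j = ee (real j * t)"
  unfolding ee_def Complex.DeMoivre by (simp add: mult_ac)

lemma ee_int: "x \<in> \<int> \<Longrightarrow> ee x = 1"
  by (simp add: ee_def)

lemma ee_zero [simp]: "ee 0 = 1" by (simp add: ee_def)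

lemma ee_eq_1: "ee x = 1 \<Longrightarrow> x \<in> \<int>"
proof -
  assume "ee x = 1"
  hence "cos (2 * pi * x) = 1" unfolding ee_def by (metis cis.sel(1) one_complex.sel(1))
  then obtain n :: int where "2 * pi * x = of_int n * 2 * pi" by (auto simp: cos_one_2pi_int)
  hence "x = of_int n" by simp
  thus "x \<in> \<int>" by simp
qed

lemma ee_dist: "(norm (ee x - 1))\<^sup>2 = 2 - 2 * cos (2 * pi * x)"
proof -
  have "(norm (ee x - 1))\<^sup>2 = (cos (2*pi*x) - 1)\<^sup>2 + (sin (2*pi*x))\<^sup>2"
    by (simp add: ee_def cmod_power2 cis.ctr)
  also have "\<dots> = 2 - 2 * cos (2 * pi * x)"
    using sin_cos_squared_add[of "2*pi*x"] by (simp add: power2_eq_square algebra_simps)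
  finally show ?thesis .
qed

lemma irrat_mult:
  assumes "x \<notin> \<rat>" "q \<in> \<rat>" "q \<noteq> 0" shows "x * q \<notin> \<rat>"
proof
  assume "x * q \<in> \<rat>"
  hence "x * q / q \<in> \<rat>" using assms(2) by (rule Rats_divide)
  thus False using assms by simp
qed

lemma weyl:
  "c (Suc n) \<notin> \<rat> \<Longrightarrow> (\<lambda>K. (\<Sum>m<K. ee (pf c (Suc n) (real m))) / of_nat K) \<longlonglongrightarrow> 0"
proof (induction n arbitrary: c)
  case 0
  define z where "z = ee (c 1)"
  have z1: "z \<noteq> 1"
  proof
    assume "z = 1"
    hence "c 1 \<in> \<int>" unfolding z_def by (rule ee_eq_1)
    hence "c 1 \<in> \<rat>" by (rule Ints_subset_Rats[THEN subsetD])
    thus False using 0 by simp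
  qed
  have eq: "(\<Sum>m<K. ee (pf c (Suc 0) (real m))) = ee (c 0) * (\<Sum>m<K. z ^ m)" for K
    by (simp add: pf_def sum_distrib_left z_def ee_pow ee_add mult.commute)
  have bnd: "norm (\<Sum>m<K. ee (pf c (Suc 0) (real m))) \<le> 2 / norm (1 - z)" for K
  proof -
    have "norm (\<Sum>m<K. ee (pf c (Suc 0) (real m))) = norm (\<Sum>m<K. z ^ m)"
      by (simp add: eq norm_mult)
    also have "\<dots> = norm (1 - z ^ K) / norm (1 - z)"
      using z1 by (simp add: sum_gp_strict norm_divide)
    also have "\<dots> \<le> 2 / norm (1 - z)"
    proof (rule divide_right_mono)
      have "norm (1 - z ^ K) \<le> norm (1::complex) + norm (z ^ K)" by (rule norm_triangle_ineq4)
      also have "\<dots> = 2" by (simp add: z_def norm_power)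
      finally show "norm (1 - z ^ K) \<le> 2" .
    qed simp
    finally show ?thesis .
  qed
  show ?case by (rule bounded_div_tendsto0[OF bnd])
next
  case (Suc n)
  define u where "u m = ee (pf c (Suc (Suc n)) (real m))" for m
  show ?case unfolding u_def[symmetric]
  proof (rule vdc)
    show "norm (u m) \<le> 1" for m by (simp add: u_def)
    fix h :: nat assume h: "h > 0"
    have "dcoef c (Suc (Suc n)) (real h) (Suc n) \<notin> \<rat>"
      unfolding dcoef_top mult.assoc
      by (rule irrat_mult[OF Suc.prems]) (use h in auto)
    from Suc.IH[of "dcoef c (Suc (Suc n)) (real h)", OF this]
    have "(\<lambda>K. (\<Sum>m<K. ee (pf (dcoef c (Suc (Suc n)) (real h)) (Suc n) (real m))) / of_nat K) \<longlonglongrightarrow> 0" .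
    moreover have "u (m + h) * cnj (u m) = ee (pf (dcoef c (Suc (Suc n)) (real h)) (Suc n) (real m))" for m
      unfolding u_def ee_cnj pf_diff[symmetric] by simp
    ultimately show "(\<lambda>K. (\<Sum>m<K. u (m + h) * cnj (u m)) / of_nat K) \<longlonglongrightarrow> 0" by simp
  qed
qed



lemma cos_far:
  assumes "e' > 0" "e' \<le> 1/2" "e' \<le> f" "e' \<le> 1 - f"
  shows "cos (2 * pi * f) \<le> cos (2 * pi * e')"
proof (cases "f \<le> 1/2")
  case True
  show ?thesis by (rule cos_monotone_0_pi_le) (use assms True in auto)
next
  case False
  have "cos (2 * pi * f) = cos (2 * pi - 2 * pi * f)" by simp
  also have "\<dots> = cos (2 * pi * (1 - f))" by (simp add: algebra_simps)
  also have "\<dots> \<le> cos (2 * pi * e')"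
    by (rule cos_monotone_0_pi_le) (use assms False in auto)
  finally show ?thesis .
qed

lemma density:
  assumes irr: "c (Suc n) \<notin> \<rat>" and e: "e > 0"
  shows "\<exists>m::nat. \<exists>z::int. \<bar>pf c (Suc n) (real m) - t - of_int z\<bar> < e"
proof (rule ccontr)
  assume neg: "\<not> ?thesis"
  define e' where "e' = min e (1/2)"
  have e'1: "0 < e'" "e' \<le> 1/2" "e' \<le> e" using e by (auto simp: e'_def)
  define s where "s m = pf c (Suc n) (real m) - t" for m
  define \<gamma> where "\<gamma> = 2 - 2 * cos (2 * pi * e')"
  have "cos (2 * pi * e') < cos 0"
    by (rule cos_monotone_0_pi) (use e'1 in auto)
  hence gpos: "\<gamma> > 0" unfolding \<gamma>_def by simp
  have far: "\<gamma> \<le> (norm (ee (s m) - 1))\<^sup>2" for m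
  proof -
    obtain f where f_def: "f = frac (s m)" by blast
    have sf: "s m = f + of_int \<lfloor>s m\<rfloor>" using f_def by (simp add: frac_def)
    have "\<not> \<bar>s m - of_int \<lfloor>s m\<rfloor>\<bar> < e" using neg unfolding s_def by blast
    hence f1: "e' \<le> f" using e'1 sf by auto
    have "\<not> \<bar>s m - of_int (\<lfloor>s m\<rfloor> + 1)\<bar> < e" using neg unfolding s_def by blast
    moreover have "f < 1" unfolding f_def by (rule frac_lt_1)
    ultimately have f2: "e' \<le> 1 - f" using e'1 sf by auto
    have "ee (s m) = ee f * ee (of_int \<lfloor>s m\<rfloor>)" by (metis sf ee_add)
    hence "ee (s m) = ee f" by (simp add: ee_int)
    hence "(norm (ee (s m) - 1))\<^sup>2 = 2 - 2 * cos (2 * pi * f)" by (simp add: ee_dist)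
    thus ?thesis using cos_far[OF e'1(1,2) f1 f2] unfolding \<gamma>_def by simp
  qed
  define B where "B = 4 / \<gamma>"
  have Gb: "(norm (\<Sum>j<J. ee (real j * s m)))\<^sup>2 \<le> B" for J m
  proof -
    define z where "z = ee (s m)"
    have zn: "norm (1 - z) > 0" using far[of m] gpos unfolding z_def
      by (metis norm_minus_commute norm_zero power2_eq_square mult_zero_left not_le zero_less_norm_iff)
    have "(\<Sum>j<J. ee (real j * s m)) = (\<Sum>j<J. z ^ j)" by (simp add: z_def ee_pow)
    also have "\<dots> = (1 - z ^ J) / (1 - z)" using zn by (auto simp: sum_gp_strict)
    finally have eq: "(\<Sum>j<J. ee (real j * s m)) = (1 - z ^ J) / (1 - z)" .
    have "norm (1 - z ^ J) \<le> 2"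
    proof -
      have "norm (1 - z ^ J) \<le> norm (1::complex) + norm (z ^ J)" by (rule norm_triangle_ineq4)
      also have "\<dots> = 2" by (simp add: z_def norm_power)
      finally show ?thesis .
    qed
    hence "norm (\<Sum>j<J. ee (real j * s m)) \<le> 2 / norm (1 - z)"
      unfolding eq norm_divide by (rule divide_right_mono) simp
    hence "(norm (\<Sum>j<J. ee (real j * s m)))\<^sup>2 \<le> (2 / norm (1 - z))\<^sup>2"
      by (rule power_mono) simp
    also have "\<dots> = 4 / (norm (1 - z))\<^sup>2" by (simp add: power_divide)
    also have "\<dots> \<le> 4 / \<gamma>"
      using far[of m] gpos unfolding z_def
      by (intro divide_left_mono) (auto simp: norm_minus_commute, meson less_le_trans mult_pos_pos)
    finally show ?thesis unfolding B_def .
  qed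
  obtain J :: nat where BJ: "B < real J" using reals_Archimedean2 by blast
  define G where "G m = (\<Sum>j<J. ee (real j * s m))" for m
  define X where "X K = (\<Sum>m<K. (norm (G m))\<^sup>2) / real K" for K
  have Xle: "X K \<le> B" if "K \<ge> 1" for K
  proof -
    have "(\<Sum>m<K. (norm (G m))\<^sup>2) \<le> (\<Sum>m<K. B)" by (rule sum_mono) (simp add: G_def Gb)
    thus ?thesis using that unfolding X_def by (simp add: pos_divide_le_eq mult.commute)
  qed
  have each: "(\<lambda>K. (\<Sum>m<K. ee ((real j - real j') * s m)) / of_nat K) \<longlonglongrightarrow> (if j = j' then 1 else 0)" for j j'
  proof (cases "j = j'")
    case True
    have "\<forall>\<^sub>F K in sequentially. (\<Sum>m<K. ee ((real j - real j') * s m)) / of_nat K = 1"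
      using True eventually_ge_at_top[of "1::nat"] by (auto elim: eventually_mono)
    thus ?thesis using True by (simp add: tendsto_eventually)
  next
    case False
    define h where "h = real j - real j'"
    have h0: "h \<noteq> 0" "h \<in> \<rat>" using False by (auto simp: h_def)
    have eqs: "ee (h * s m) = ee (- h * t) * ee (pf (\<lambda>i. h * c i) (Suc n) (real m))" for m
      unfolding pf_smult s_def ee_add[symmetric] by (simp add: algebra_simps)
    have irr': "h * c (Suc n) \<notin> \<rat>" using irrat_mult[OF irr h0(2,1)] by (simp add: mult.commute)
    from weyl[of "\<lambda>i. h * c i", OF irr']
    have "(\<lambda>K. ee (- h * t) * ((\<Sum>m<K. ee (pf (\<lambda>i. h * c i) (Suc n) (real m))) / of_nat K)) \<longlonglongrightarrow> ee (- h * t) * 0"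
      by (intro tendsto_mult tendsto_const) simp
    thus ?thesis using False unfolding h_def[symmetric] eqs
      by (simp add: sum_distrib_left)
  qed
  have "complex_of_real (X K) = (\<Sum>j<J. \<Sum>j'<J. (\<Sum>m<K. ee ((real j - real j') * s m)) / of_nat K)" for K
  proof -
    have "complex_of_real (\<Sum>m<K. (norm (G m))\<^sup>2) = (\<Sum>m<K. G m * cnj (G m))"
      by (subst of_real_sum) (simp only: complex_norm_square)
    also have "\<dots> = (\<Sum>m<K. \<Sum>j<J. \<Sum>j'<J. ee (real j * s m) * cnj (ee (real j' * s m)))"
      unfolding G_def by (simp add: cnj_sum sum_product)
    also have "\<dots> = (\<Sum>j<J. \<Sum>j'<J. \<Sum>m<K. ee ((real j - real j') * s m))"
      by (simp add: ee_cnj left_diff_distrib sum.swap[of _ "{..<K}"])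
    finally have eqS: "complex_of_real (\<Sum>m<K. (norm (G m))\<^sup>2) = (\<Sum>j<J. \<Sum>j'<J. \<Sum>m<K. ee ((real j - real j') * s m))" .
    have "complex_of_real (X K) = complex_of_real (\<Sum>m<K. (norm (G m))\<^sup>2) / of_nat K"
      unfolding X_def by (simp only: of_real_divide of_real_of_nat_eq)
    also have "\<dots> = (\<Sum>j<J. \<Sum>j'<J. \<Sum>m<K. ee ((real j - real j') * s m)) / of_nat K"
      unfolding eqS ..
    also have "\<dots> = (\<Sum>j<J. \<Sum>j'<J. (\<Sum>m<K. ee ((real j - real j') * s m)) / of_nat K)"
      by (simp only: sum_divide_distrib)
    finally show ?thesis .
  qed
  moreover have "(\<lambda>K. \<Sum>j<J. \<Sum>j'<J. (\<Sum>m<K. ee ((real j - real j') * s m)) / of_nat K)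
      \<longlonglongrightarrow> (\<Sum>j<J. \<Sum>j'<J. (if j = j' then 1 else 0))"
    by (intro tendsto_sum each)
  ultimately have "(\<lambda>K. complex_of_real (X K)) \<longlonglongrightarrow> complex_of_real (real J)" by simp
  hence "X \<longlonglongrightarrow> real J" by (simp only: tendsto_of_real_iff)
  hence "real J \<le> B" by (rule LIMSEQ_le_const2) (use Xle in auto)
  thus False using BJ by simp
qed



definition E :: "nat \<Rightarrow> (nat \<Rightarrow> real) \<Rightarrow> nat \<Rightarrow> real" where
  "E k v i = (\<Sum>l\<le>i. real (i choose l) * real k ^ (i - l) * v l)"

lemma E_0: "E 0 v i = v i"
proof -
  have "E 0 v i = (\<Sum>l\<le>i. (if l = i then v l else 0))"
    unfolding E_def by (intro sum.cong) (auto simp: power_0_left)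
  also have "\<dots> = v i" by simp
  finally show ?thesis .
qed

lemma E_at0: "E k v 0 = v 0" by (simp add: E_def)

lemma E_step: "(\<Sum>j\<le>i. real (i choose j) * E k v j) = E (Suc k) v i"
proof -
  have "(\<Sum>j\<le>i. real (i choose j) * E k v j)
      = (\<Sum>j\<le>i. \<Sum>l\<le>i. (if l \<le> j then real (i choose j) * real (j choose l) * real k ^ (j - l) * v l else 0))"
  proof (rule sum.cong[OF refl])
    fix j assume "j \<in> {..i}"
    have "(\<Sum>l\<le>i. (if l \<le> j then real (i choose j) * real (j choose l) * real k ^ (j - l) * v l else 0))
        = (\<Sum>l\<in>{..i} \<inter> {l. l \<le> j}. real (i choose j) * real (j choose l) * real k ^ (j - l) * v l)"
      by (simp add: sum.inter_restrict)
    also have "{..i} \<inter> {l. l \<le> j} = {..j}" using \<open>j \<in> {..i}\<close> by auto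
    finally show "real (i choose j) * E k v j = (\<Sum>l\<le>i. (if l \<le> j then real (i choose j) * real (j choose l) * real k ^ (j - l) * v l else 0))"
      by (simp add: E_def sum_distrib_left mult_ac)
  qed
  also have "\<dots> = (\<Sum>l\<le>i. \<Sum>j\<le>i. (if l \<le> j then real (i choose j) * real (j choose l) * real k ^ (j - l) * v l else 0))"
    by (rule sum.swap)
  also have "\<dots> = (\<Sum>l\<le>i. real (i choose l) * real (Suc k) ^ (i - l) * v l)"
  proof (rule sum.cong[OF refl])
    fix l assume l: "l \<in> {..i}"
    have "(\<Sum>j\<le>i. (if l \<le> j then real (i choose j) * real (j choose l) * real k ^ (j - l) * v l else 0))
        = (\<Sum>j=l..i. real (i choose j) * real (j choose l) * real k ^ (j - l) * v l)"
    proof -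
      have "(\<Sum>j\<le>i. (if l \<le> j then real (i choose j) * real (j choose l) * real k ^ (j - l) * v l else 0))
        = (\<Sum>j\<in>{..i} \<inter> {j. l \<le> j}. real (i choose j) * real (j choose l) * real k ^ (j - l) * v l)"
        by (simp add: sum.inter_restrict)
      also have "{..i} \<inter> {j. l \<le> j} = {l..i}" by auto
      finally show ?thesis .
    qed
    also have "\<dots> = (\<Sum>j=l..i. real (i choose l) * real ((i - l) choose (j - l)) * real k ^ (j - l) * v l)"
    proof (rule sum.cong[OF refl])
      fix j assume "j \<in> {l..i}"
      hence "(i choose j) * (j choose l) = (i choose l) * ((i - l) choose (j - l))"
        by (intro choose_mult) auto
      hence "real (i choose j) * real (j choose l) = real (i choose l) * real ((i - l) choose (j - l))"
        by (metis of_nat_mult)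
      thus "real (i choose j) * real (j choose l) * real k ^ (j - l) * v l = real (i choose l) * real ((i - l) choose (j - l)) * real k ^ (j - l) * v l"
        by simp
    qed
    also have "\<dots> = (\<Sum>s=0..i-l. real (i choose l) * real ((i - l) choose s) * real k ^ s * v l)"
    proof -
      have "{l..i} = {0 + l..(i - l) + l}" using l by auto
      hence "(\<Sum>j=l..i. real (i choose l) * real ((i - l) choose (j - l)) * real k ^ (j - l) * v l)
           = (\<Sum>s=0..i-l. real (i choose l) * real ((i - l) choose (s + l - l)) * real k ^ (s + l - l) * v l)"
        by (simp only: sum.shift_bounds_cl_nat_ivl)
      thus ?thesis by simp
    qed
    also have "\<dots> = real (i choose l) * v l * (\<Sum>s\<le>i-l. real ((i - l) choose s) * real k ^ s * 1 ^ (i - l - s))"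
      by (simp add: sum_distrib_left atLeast0AtMost mult_ac)
    also have "\<dots> = real (i choose l) * v l * (real k + 1) ^ (i - l)"
      by (simp only: binomial_ring[symmetric])
    finally show "(\<Sum>j\<le>i. (if l \<le> j then real (i choose j) * real (j choose l) * real k ^ (j - l) * v l else 0))
        = real (i choose l) * real (Suc k) ^ (i - l) * v l" by (simp add: mult_ac add.commute)
  qed
  finally show ?thesis unfolding E_def .
qed

lemma sum_split0: "(\<Sum>j\<le>i. f j) = f 0 + (\<Sum>j=1..i. f j)" for f :: "nat \<Rightarrow> real"
proof -
  have "{..i} = insert 0 {1..i}" by auto
  thus ?thesis by simp
qed

lemma frac_cong: "x - y \<in> \<int> \<Longrightarrow> frac x = frac y"
  by (metis add.commute diff_add_cancel frac_add_int_right)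

lemma fmap_iter:
  assumes x: "x \<in> torus d"
  shows "(fmap \<zeta> d ^^ k) x = (\<lambda>i. if i \<in> {1..d} then frac (E k (x(0 := \<zeta>)) i) else 0)"
proof (induction k)
  case 0
  show ?case
  proof
    fix i
    show "(fmap \<zeta> d ^^ 0) x i = (if i \<in> {1..d} then frac (E 0 (x(0 := \<zeta>)) i) else 0)"
      using x unfolding torus_def by (auto simp: E_0 frac_eq)
  qed
next
  case (Suc k)
  define v where "v = x(0 := \<zeta>)"
  show ?case
  proof
    fix i
    show "(fmap \<zeta> d ^^ Suc k) x i = (if i \<in> {1..d} then frac (E (Suc k) (x(0 := \<zeta>)) i) else 0)"
    proof (cases "i \<in> {1..d}")
      case False thus ?thesis by (auto simp: fmap_def)
    next
      case True
      have "(fmap \<zeta> d ^^ Suc k) x i = frac (\<zeta> + (\<Sum>j=1..i. real (i choose j) * frac (E k v j)))"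
        using True by (simp add: fmap_def Suc.IH v_def)
      also have "\<dots> = frac (\<zeta> + (\<Sum>j=1..i. real (i choose j) * E k v j))"
      proof (rule frac_cong)
        have "(\<zeta> + (\<Sum>j=1..i. real (i choose j) * frac (E k v j))) - (\<zeta> + (\<Sum>j=1..i. real (i choose j) * E k v j))
            = - (\<Sum>j=1..i. real (i choose j) * of_int \<lfloor>E k v j\<rfloor>)"
          by (simp add: frac_def sum_subtractf[symmetric] right_diff_distrib sum_negf[symmetric])
        also have "\<dots> \<in> \<int>" by (intro Ints_minus Ints_sum Ints_mult) auto
        finally show "(\<zeta> + (\<Sum>j=1..i. real (i choose j) * frac (E k v j))) - (\<zeta> + (\<Sum>j=1..i. real (i choose j) * E k v j)) \<in> \<int>" .
      qed
      also have "\<zeta> + (\<Sum>j=1..i. real (i choose j) * E k v j) = E (Suc k) v i"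
        unfolding E_step[symmetric] sum_split0[of _ i] by (simp add: E_at0 v_def)
      finally show ?thesis using True by (simp add: v_def)
    qed
  qed
qed

lemma Mmul_iter:
  assumes r: "\<And>i. i \<notin> {1..d} \<Longrightarrow> r i = 0"
  shows "(Mmul d ^^ k) r = (\<lambda>i. if i \<in> {1..d} then E k (r(0 := 0)) i else 0)"
proof (induction k)
  case 0
  show ?case
  proof
    fix i
    show "(Mmul d ^^ 0) r i = (if i \<in> {1..d} then E 0 (r(0 := 0)) i else 0)"
      using r[of i] by (auto simp: E_0)
  qed
next
  case (Suc k)
  define v where "v = r(0 := 0)"
  show ?case
  proof
    fix i
    show "(Mmul d ^^ Suc k) r i = (if i \<in> {1..d} then E (Suc k) (r(0 := 0)) i else 0)"
    proof (cases "i \<in> {1..d}")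
      case False thus ?thesis by (auto simp: Mmul_def)
    next
      case True
      have "(Mmul d ^^ Suc k) r i = (\<Sum>j=1..i. real (i choose j) * E k v j)"
        using True by (simp add: Mmul_def Suc.IH v_def)
      also have "\<dots> = E (Suc k) v i"
        unfolding E_step[symmetric] sum_split0[of _ i] by (simp add: E_at0 v_def)
      finally show ?thesis using True by (simp add: v_def)
    qed
  qed
qed

lemma E_add: "E k (\<lambda>l. v l + w l) i = E k v i + E k w i"
  by (simp add: E_def distrib_left sum.distrib)

lemma E_pf: "E k v d = pf (\<lambda>j. real (d choose (d - j)) * v (d - j)) d (real k)"
proof -
  have "E k v d = (\<Sum>l=0..d. real (d choose l) * real k ^ (d - l) * v l)"
    by (simp add: E_def atLeast0AtMost)
  also have "\<dots> = (\<Sum>j=0..d. real (d choose (d + 0 - j)) * real k ^ (d - (d + 0 - j)) * v (d + 0 - j))"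
    by (rule sum.atLeastAtMost_rev)
  also have "\<dots> = (\<Sum>j\<le>d. real (d choose (d - j)) * v (d - j) * real k ^ j)"
    by (auto simp: atLeast0AtMost intro!: sum.cong)
  finally show ?thesis by (simp add: pf_def)
qed



lemma arc:
  assumes p: "p \<in> torus_closure d (Uset b d t)" and d: "d > 0"
  and lo: "0 \<le> log (real b) (real t)" and hi: "log (real b) (real t + 1) \<le> 1"
  shows "(log (real b) (real t) \<le> p d \<and> p d \<le> log (real b) (real t + 1)) \<or> (p d = 0 \<and> log (real b) (real t + 1) = 1)"
proof -
  define Lo where "Lo = log (real b) (real t)"
  define Hi where "Hi = log (real b) (real t + 1)"
  define w where "w = p d"
  have dd: "d \<in> {1..d}" using d by simp
  have pt: "p \<in> torus d" and cl: "\<forall>e>0. \<exists>u\<in>Uset b d t. \<forall>i\<in>{1..d}. \<exists>m::int. \<bar>p i - u i - of_int m\<bar> < e"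
    using p unfolding torus_closure_def by auto
  have w01: "0 \<le> w" "w < 1" using pt dd unfolding torus_def w_def by auto
  have key: "\<exists>u m. Lo \<le> u \<and> u < Hi \<and> \<bar>w - u - of_int (m::int)\<bar> < e" if ep: "e > 0" for e
  proof -
    obtain u where u: "u \<in> Uset b d t" "\<forall>i\<in>{1..d}. \<exists>m::int. \<bar>p i - u i - of_int m\<bar> < e"
      using cl ep by blast
    obtain m :: int where "\<bar>p d - u d - of_int m\<bar> < e" using u(2) dd by blast
    moreover have "Lo \<le> u d" "u d < Hi" using u(1) unfolding Uset_def Lo_def Hi_def by auto
    ultimately show ?thesis unfolding w_def by blast
  qed
  show ?thesis
  proof (rule ccontr)
    assume nc: "\<not> ?thesis"
    hence nc': "\<not> (Lo \<le> w \<and> w \<le> Hi)" "\<not> (w = 0 \<and> Hi = 1)"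
      unfolding Lo_def Hi_def w_def by auto
    have lo': "0 \<le> Lo" and hi': "Hi \<le> 1" using lo hi by (auto simp: Lo_def Hi_def)
    consider (a) "w < Lo" | (b) "Hi < w" using nc' by linarith
    thus False
    proof cases
      case a
      define e where "e = min (Lo - w) (min (1 - Hi + w) 1)"
      have "w > 0 \<or> Hi < 1" using nc'(2) w01 hi' by linarith
      hence epos: "e > 0" unfolding e_def using a w01 hi' by auto
      obtain u and m :: int where um: "Lo \<le> u" "u < Hi" "\<bar>w - u - of_int m\<bar> < e"
        using key[OF epos] by blast
      have e1: "e \<le> Lo - w" "e \<le> 1 - Hi + w" "e \<le> 1" unfolding e_def by auto
      consider "m \<le> -1" | "m = 0" | "m \<ge> 1" by linarith
      thus False
      proof cases
        case 1 hence "of_int m \<le> (-1::real)" by simp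
        thus False using um e1 by linarith
      next
        case 2 thus False using um e1 by simp
      next
        case 3 hence "of_int m \<ge> (1::real)" by simp
        thus False using um e1 a by linarith
      qed
    next
      case b
      define e where "e = min (w - Hi) (min (1 - w + Lo) 1)"
      have epos: "e > 0" unfolding e_def using b w01 lo' by auto
      obtain u and m :: int where um: "Lo \<le> u" "u < Hi" "\<bar>w - u - of_int m\<bar> < e"
        using key[OF epos] by blast
      have e1: "e \<le> w - Hi" "e \<le> 1 - w + Lo" "e \<le> 1" unfolding e_def by auto
      consider "m \<le> -1" | "m = 0" | "m \<ge> 1" by linarith
      thus False
      proof cases
        case 1 hence "of_int m \<le> (-1::real)" by simp
        thus False using um e1 b by linarith
      next
        case 2 thus False using um e1 by simp
      next
        case 3 hence "of_int m \<ge> (1::real)" by simp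
        thus False using um e1 by linarith
      qed
    qed
  qed
qed

lemma log_facts:
  assumes b: "b \<ge> 5" and t: "t \<in> {1..b-1}"
  shows "0 \<le> log (real b) (real t)" "log (real b) (real t + 1) \<le> 1"
    "log (real b) (real t + 1) - log (real b) (real t) \<le> log (real b) 2"
    "log (real b) (real t) \<le> log (real b) (real t + 1)"
proof -
  have b1: "real b > 1" using b by simp
  have t1: "real t \<ge> 1" using t by simp
  show "0 \<le> log (real b) (real t)" using b1 t1 by simp
  have "real t + 1 \<le> real b" using t b by auto
  hence "log (real b) (real t + 1) \<le> log (real b) (real b)" using b1 t1 by (subst log_le_cancel_iff) auto
  thus "log (real b) (real t + 1) \<le> 1" using b1 by simp
  have "log (real b) (real t + 1) - log (real b) (real t) = log (real b) ((real t + 1) / real t)"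
    using b1 t1 by (simp add: log_divide)
  also have "\<dots> \<le> log (real b) 2"
    using b1 t1 by (subst log_le_cancel_iff) (auto simp: field_simps)
  finally show "log (real b) (real t + 1) - log (real b) (real t) \<le> log (real b) 2" .
  show "log (real b) (real t) \<le> log (real b) (real t + 1)"
    using b1 t1 by (subst log_le_cancel_iff) auto
qed

lemma L2_facts:
  assumes b: "b \<ge> 5"
  shows "0 < log (real b) 2" "log (real b) 2 < 1/2"
proof -
  have b1: "real b > 1" using b by simp
  show "0 < log (real b) 2" using b1 by simp
  have "2 * log (real b) 2 = log (real b) (2 ^ 2)" using log_nat_power[of 2 "real b" 2] by simp
  also have "\<dots> < log (real b) (real b)" using b1 b by (subst log_less_cancel_iff) auto
  also have "\<dots> = 1" using b1 by simp
  finally show "log (real b) 2 < 1/2" by simp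
qed

lemma torus_d: "p \<in> torus d \<Longrightarrow> d > 0 \<Longrightarrow> 0 \<le> p d \<and> p d < 1"
  unfolding torus_def by auto

lemma closure_torus: "p \<in> torus_closure d U \<Longrightarrow> p \<in> torus d"
  unfolding torus_closure_def by auto

lemma e1:
  assumes b: "b \<ge> 5" and t: "t \<in> {1..b-1}" and d: "d > 0"
  and p: "p \<in> torus_closure d (Uset b d t)" and q: "q \<in> torus_closure d (Uset b d t)"
  and pd: "0 < p d" "p d < log (real b) 2" and qd: "log (real b) 2 < q d" "q d < 1"
  shows False
proof -
  note lf = log_facts[OF b t]
  have b1: "real b > 1" using b by simp
  have L2: "0 < log (real b) 2" using L2_facts[OF b] by simp
  from arc[OF p d lf(1,2)] pd have "log (real b) (real t) \<le> p d" by auto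
  hence "log (real b) (real t) < log (real b) 2" using pd by simp
  hence "real t < 2" using b1 t by (subst (asm) log_less_cancel_iff) auto
  hence "t = 1" using t by auto
  hence Hi: "log (real b) (real t + 1) = log (real b) 2" by simp
  from arc[OF q d lf(1,2)] qd L2 show False unfolding Hi by auto
qed

lemma e2:
  assumes b: "b \<ge> 5" and t: "t \<in> {1..b-1}" and d: "d > 0"
  and p: "p \<in> torus_closure d (Uset b d t)" and q: "q \<in> torus_closure d (Uset b d t)"
  and far: "log (real b) 2 < frac (q d - p d)" "frac (q d - p d) < 1 - log (real b) 2"
  shows False
proof -
  note lf = log_facts[OF b t]
  define Lo where "Lo = log (real b) (real t)"
  define Hi where "Hi = log (real b) (real t + 1)"
  define L2 where "L2 = log (real b) 2"
  have L2h: "L2 < 1/2" using L2_facts[OF b] unfolding L2_def by simp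
  have pp: "\<exists>p'. Lo \<le> p' \<and> p' \<le> Hi \<and> r d - p' \<in> \<int>" if "r \<in> torus_closure d (Uset b d t)" for r
  proof -
    from arc[OF that(1) d lf(1,2)]
    consider "Lo \<le> r d \<and> r d \<le> Hi" | "r d = 0 \<and> Hi = 1" unfolding Lo_def Hi_def by blast
    thus ?thesis
    proof cases
      case 1 thus ?thesis using that by (intro exI[of _ "r d"]) auto
    next
      case 2
      have "Lo \<le> 1" using lf unfolding Lo_def Hi_def by linarith
      thus ?thesis using 2 that by (intro exI[of _ 1]) (auto simp: Lo_def Hi_def)
    qed
  qed
  obtain p' where p': "Lo \<le> p'" "p' \<le> Hi" "p d - p' \<in> \<int>" using pp[OF p] by blast
  obtain q' where q': "Lo \<le> q'" "q' \<le> Hi" "q d - q' \<in> \<int>" using pp[OF q] by blast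
  have len: "Hi - Lo \<le> L2" using lf unfolding Hi_def Lo_def L2_def by simp
  have "(q d - p d) - (q' - p') = (q d - q') - (p d - p')" by simp
  also have "\<dots> \<in> \<int>" by (rule Ints_diff[OF q'(3) p'(3)])
  finally have fr: "frac (q d - p d) = frac (q' - p')" by (rule frac_cong)
  show False
  proof (cases "q' - p' \<ge> 0")
    case True
    have "q' - p' < 1" using p' q' len L2h by linarith
    hence "frac (q' - p') = q' - p'" using True by (simp add: frac_eq)
    thus False using far fr p' q' len unfolding L2_def by linarith
  next
    case False
    have i1: "(q' - p') - (q' - p' + 1) \<in> \<int>" by simp
    have i2: "0 \<le> q' - p' + 1" "q' - p' + 1 < 1" using False p' q' len L2h by linarith+
    have "frac (q' - p') = q' - p' + 1"
      unfolding frac_unique_iff using i1 i2 by blast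
    thus False using far fr p' q' len False unfolding L2_def by linarith
  qed
qed



lemma common_denom:
  assumes "finite S" "\<forall>j\<in>S. c j \<in> \<rat>"
  shows "\<exists>N::nat. N > 0 \<and> (\<forall>j\<in>S. real N * c j \<in> \<int>)"
  using assms
proof (induction S rule: finite_induct)
  case empty show ?case by (intro exI[of _ 1]) simp
next
  case (insert a S)
  then obtain N :: nat where N: "N > 0" "\<forall>j\<in>S. real N * c j \<in> \<int>" by auto
  have "c a \<in> \<rat>" using insert by auto
  then obtain p :: int and q :: int where pq: "q > 0" "c a = of_int p / of_int q"
    by (auto elim!: Rats_cases')
  define N' where "N' = N * nat q"
  have rq: "real (nat q) = of_int q" using pq by simp
  have "real N' * c a = real N * of_int p" unfolding N'_def using pq rq by simp
  hence A: "real N' * c a \<in> \<int>" by simp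
  have B: "real N' * c j \<in> \<int>" if "j \<in> S" for j
  proof -
    have "real N' * c j = of_int q * (real N * c j)" unfolding N'_def using rq by simp
    moreover have "of_int q * (real N * c j) \<in> \<int>" using N(2) that by (intro Ints_mult[OF Ints_of_int]) auto
    ultimately show ?thesis by (simp only:)
  qed
  have C: "N' > 0" using N pq unfolding N'_def by simp
  show ?case using A B C by (intro exI[of _ N']) auto
qed

lemma pow_diff_int:
  "\<exists>z::int. (real a + real N * real m) ^ j - real a ^ j = real N * of_int z"
proof (induction j)
  case 0 show ?case by (intro exI[of _ 0]) simp
next
  case (Suc j)
  then obtain z :: int where z: "(real a + real N * real m) ^ j - real a ^ j = real N * of_int z" by blast
  define z' where "z' = (int a + int N * int m) * z + int a ^ j * int m"
  have "(real a + real N * real m) ^ Suc j - real a ^ Suc j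
      = (real a + real N * real m) * ((real a + real N * real m) ^ j - real a ^ j) + real a ^ j * real N * real m"
    by (simp add: algebra_simps)
  also have "\<dots> = real N * of_int z'" unfolding z z'_def by (simp add: algebra_simps)
  finally show ?case by blast
qed

lemma pf_split:
  assumes "i \<le> n"
  shows "pf c n x = pf c i x + (\<Sum>j\<in>{i<..n}. c j * x ^ j)"
proof -
  have "{..n} = {..i} \<union> {i<..n}" using assms by auto
  moreover have "{..i} \<inter> {i<..n} = {}" by auto
  ultimately show ?thesis unfolding pf_def by (simp add: sum.union_disjoint)
qed

lemma frac_near:
  assumes "\<bar>x - z - of_int n\<bar> < \<eta>" "0 \<le> z - \<eta>" "z + \<eta> \<le> 1"
  shows "frac x = x - of_int n"
  unfolding frac_unique_iff using assms by auto

lemma density':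
  assumes "d > 0" "c d \<notin> \<rat>" "e > 0"
  shows "\<exists>m::nat. \<exists>z::int. \<bar>pf c d (real m) - t - of_int z\<bar> < e"
proof -
  have "d = Suc (d - 1)" using assms by simp
  thus ?thesis using density[of c "d - 1" e t] assms by metis
qed



theorem mainTheorem5:
  fixes d b :: nat and a :: real and x y :: "nat \<Rightarrow> real"
  assumes "d > 0" and "b \<ge> 5" and "a > 0"
    and "log (real b) a \<notin> \<rat>"
    and "x \<in> torus d" and "y \<in> torus d"
    and "\<not> stable d (\<lambda>i. y i - x i)"
  shows "\<not> sim b (log (real b) a) d x y"
proof
  assume S: "sim b (log (real b) a) d x y"
  note d = assms(1) and b = assms(2) and xt = assms(5) and yt = assms(6)
  define \<zeta> where "\<zeta> = log (real b) a"
  have zirr: "\<zeta> \<notin> \<rat>" using assms(4) unfolding \<zeta>_def .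
  define L2 where "L2 = log (real b) 2"
  have L2f: "0 < L2" "L2 < 1/2" using L2_facts[OF b] unfolding L2_def by auto
  have good: "\<exists>t\<in>{1..b-1}. (fmap \<zeta> d ^^ k) x \<in> torus_closure d (Uset b d t) \<and>
      (fmap \<zeta> d ^^ k) y \<in> torus_closure d (Uset b d t)" for k
  proof -
    have "sim_k b \<zeta> d (Suc k) x y" using S unfolding sim_def \<zeta>_def by blast
    thus ?thesis unfolding sim_k_def by blast
  qed
  define vx where "vx = x(0 := \<zeta>)"
  define r where "r = (\<lambda>i. y i - x i)"
  define w where "w = r(0 := 0)"
  define Q where "Q k = E k vx d" for k
  define D where "D k = E k w d" for k
  have dd: "d \<in> {1..d}" using d by simp
  have fx: "(fmap \<zeta> d ^^ k) x d = frac (Q k)" for k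
    using fmap_iter[OF xt, where \<zeta>=\<zeta> and k=k] dd unfolding Q_def vx_def by simp
  have vy: "y(0 := \<zeta>) = (\<lambda>l. vx l + w l)"
    by (rule ext) (simp add: vx_def w_def r_def)
  have fy: "(fmap \<zeta> d ^^ k) y d = frac (Q k + D k)" for k
    using fmap_iter[OF yt, where \<zeta>=\<zeta> and k=k] dd unfolding Q_def D_def vy E_add by simp
  have r0: "r i = 0" if "i \<notin> {1..d}" for i
    using xt yt that unfolding torus_def r_def by auto
  have Mr: "(Mmul d ^^ k) r d = D k" for k
    using Mmul_iter[where d=d and r=r and k=k, OF r0] dd unfolding D_def w_def by simp
  obtain k0 where k0: "k0 > 0" "D k0 \<notin> \<int>"
    using assms(7) unfolding stable_def r_def[symmetric] Mr by auto
  have FAR: False if "L2 < frac (D k)" "frac (D k) < 1 - L2" for k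
  proof -
    obtain t where t: "t \<in> {1..b-1}" "(fmap \<zeta> d ^^ k) x \<in> torus_closure d (Uset b d t)"
      "(fmap \<zeta> d ^^ k) y \<in> torus_closure d (Uset b d t)" using good[of k] by blast
    have "frac (Q k + D k) - frac (Q k) - D k = - of_int \<lfloor>Q k + D k\<rfloor> + of_int \<lfloor>Q k\<rfloor>"
      by (simp add: frac_def)
    also have "\<dots> \<in> \<int>" by simp
    finally have "frac ((fmap \<zeta> d ^^ k) y d - (fmap \<zeta> d ^^ k) x d) = frac (D k)"
      unfolding fx fy by (intro frac_cong) (simp add: algebra_simps)
    thus False using e2[OF b t(1) d t(2) t(3)] that unfolding L2_def by simp
  qed
  have NEAR: False if "0 < u1" "u1 < L2" "L2 < u2" "u2 < 1"
    "(u1 = frac (Q k) \<and> u2 = frac (Q k + D k)) \<or> (u2 = frac (Q k) \<and> u1 = frac (Q k + D k))" for k u1 u2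
  proof -
    obtain t where t: "t \<in> {1..b-1}" "(fmap \<zeta> d ^^ k) x \<in> torus_closure d (Uset b d t)"
      "(fmap \<zeta> d ^^ k) y \<in> torus_closure d (Uset b d t)" using good[of k] by blast
    from that(5) show False
    proof
      assume "u1 = frac (Q k) \<and> u2 = frac (Q k + D k)"
      thus False using e1[OF b t(1) d t(2) t(3)] that(1-4) unfolding fx fy L2_def by simp
    next
      assume "u2 = frac (Q k) \<and> u1 = frac (Q k + D k)"
      thus False using e1[OF b t(1) d t(3) t(2)] that(1-4) unfolding fx fy L2_def by simp
    qed
  qed
  define cQ where "cQ j = real (d choose (d - j)) * vx (d - j)" for j
  define cD where "cD j = real (d choose (d - j)) * w (d - j)" for j
  have Qpf: "Q k = pf cQ d (real k)" for k unfolding Q_def cQ_def by (rule E_pf)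
  have Dpf: "D k = pf cD d (real k)" for k unfolding D_def cD_def by (rule E_pf)
  have cQd: "cQ d = \<zeta>" unfolding cQ_def vx_def by simp
  show False
  proof (cases "\<exists>j\<in>{1..d}. cD j \<notin> \<rat>")
    case True
    define SS where "SS = {j\<in>{1..d}. cD j \<notin> \<rat>}"
    define i0 where "i0 = Max SS"
    have SSf: "finite SS" "SS \<noteq> {}" using True unfolding SS_def by auto
    have i0S: "i0 \<in> SS" unfolding i0_def using SSf by (rule Max_in)
    hence i0: "1 \<le> i0" "i0 \<le> d" "cD i0 \<notin> \<rat>" unfolding SS_def by auto
    have ratabove: "\<forall>j\<in>{i0<..d}. cD j \<in> \<rat>"
    proof
      fix j assume j: "j \<in> {i0<..d}"
      show "cD j \<in> \<rat>"
      proof (rule ccontr)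
        assume "cD j \<notin> \<rat>"
        hence "j \<in> SS" using j i0 unfolding SS_def by auto
        hence "j \<le> i0" unfolding i0_def using SSf by simp
        thus False using j by simp
      qed
    qed
    obtain N :: nat where N: "N > 0" "\<forall>j\<in>{i0<..d}. real N * cD j \<in> \<int>"
      using common_denom[OF _ ratabove] by auto
    define c' where "c' j = cD j * real N ^ j" for j
    have c'irr: "c' i0 \<notin> \<rat>" unfolding c'_def using N(1) by (intro irrat_mult i0(3)) auto
    obtain m :: nat and z :: int where mz: "\<bar>pf c' i0 (real m) - 1/2 - of_int z\<bar> < 1/2 - L2"
      using density'[of i0 c' "1/2 - L2" "1/2"] i0 c'irr L2f by auto
    have DN: "D (N * m) = pf c' i0 (real m) + (\<Sum>j\<in>{i0<..d}. c' j * real m ^ j)"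
    proof -
      have "D (N * m) = pf c' d (real m)"
        unfolding Dpf pf_def c'_def by (simp add: power_mult_distrib mult_ac)
      thus ?thesis using pf_split[OF i0(2)] by simp
    qed
    have restint: "(\<Sum>j\<in>{i0<..d}. c' j * real m ^ j) \<in> \<int>"
    proof (intro Ints_sum)
      fix j assume j: "j \<in> {i0<..d}"
      hence "j = Suc (j - 1)" using i0 by simp
      hence eq: "c' j * real m ^ j = (real N * cD j) * real N ^ (j - 1) * real m ^ j"
        unfolding c'_def by (metis (no_types, lifting) mult.assoc mult.commute power_Suc)
      have A: "real N * cD j \<in> \<int>" using N(2) j by auto
      have "(real N * cD j) * real N ^ (j - 1) * real m ^ j \<in> \<int>"
        by (rule Ints_mult[OF Ints_mult[OF A]]) auto
      thus "c' j * real m ^ j \<in> \<int>" unfolding eq .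
    qed
    have "frac (D (N * m)) = frac (pf c' i0 (real m))"
      unfolding DN by (rule frac_cong) (use restint in simp)
    also have "\<dots> = pf c' i0 (real m) - of_int z"
      by (rule frac_near[OF mz]) (use L2f in auto)
    finally have "L2 < frac (D (N * m))" "frac (D (N * m)) < 1 - L2" using mz by auto
    thus False by (rule FAR)
  next
    case False
    hence allrat: "\<forall>j\<in>{1..d}. cD j \<in> \<rat>" by auto
    obtain N :: nat where N: "N > 0" "\<forall>j\<in>{1..d}. real N * cD j \<in> \<int>"
      using common_denom[OF _ allrat] by auto
    have Dper: "D (k0 + N * m) - D k0 \<in> \<int>" for m
    proof -
      have "D (k0 + N * m) - D k0 = (\<Sum>j\<le>d. cD j * ((real k0 + real N * real m) ^ j - real k0 ^ j))"
        unfolding Dpf pf_def by (simp add: sum_subtractf right_diff_distrib)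
      also have "\<dots> \<in> \<int>"
      proof (intro Ints_sum)
        fix j assume j: "j \<in> {..d}"
        obtain zz :: int where zz: "(real k0 + real N * real m) ^ j - real k0 ^ j = real N * of_int zz"
          using pow_diff_int by blast
        show "cD j * ((real k0 + real N * real m) ^ j - real k0 ^ j) \<in> \<int>"
        proof (cases "j = 0")
          case True thus ?thesis by simp
        next
          case False
          hence "real N * cD j \<in> \<int>" using N(2) j by auto
          thus ?thesis unfolding zz by (metis Ints_mult Ints_of_int mult.assoc mult.commute)
        qed
      qed
      finally show ?thesis .
    qed
    define \<sigma> where "\<sigma> = frac (D k0)"
    have sig: "0 < \<sigma>" "\<sigma> < 1" unfolding \<sigma>_def using k0(2) frac_lt_1 frac_ge_0
      by (auto simp: le_less)
    have fracD: "frac (D (k0 + N * m)) = \<sigma>" for m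
      unfolding \<sigma>_def by (rule frac_cong[OF Dper])
    define cQ' where "cQ' i = (\<Sum>j=i..d. cQ j * real (j choose i) * real k0 ^ (j - i) * real N ^ i)" for i
    have Qshift: "Q (k0 + N * m) = pf cQ' d (real m)" for m
      unfolding Qpf cQ'_def using pf_affine[of cQ d "real k0" "real N" "real m"] by simp
    have cQ'd: "cQ' d = \<zeta> * real N ^ d" unfolding cQ'_def by (simp add: cQd)
    have cQ'irr: "cQ' d \<notin> \<rat>" unfolding cQ'd using N(1) by (intro irrat_mult zirr) auto
    have step: "frac (Q k + D k) = frac (frac (Q k) + \<sigma>)" if "k = k0 + N * m" for k m
    proof (rule frac_cong)
      have "(Q k + D k) - (frac (Q k) + \<sigma>) = of_int \<lfloor>Q k\<rfloor> + (D k - frac (D k))"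
        using fracD[of m] that by (simp add: frac_def)
      also have "\<dots> = of_int \<lfloor>Q k\<rfloor> + of_int \<lfloor>D k\<rfloor>" by (simp add: frac_def)
      finally show "(Q k + D k) - (frac (Q k) + \<sigma>) \<in> \<int>" by simp
    qed
    consider "L2 < \<sigma> \<and> \<sigma> < 1 - L2" | "\<sigma> \<le> L2" | "1 - L2 \<le> \<sigma>" by linarith
    thus False
    proof cases
      case 1
      thus False using FAR[of k0] unfolding \<sigma>_def by auto
    next
      case 2
      define zc where "zc = L2 - \<sigma> / 2"
      obtain m :: nat and z :: int where mz: "\<bar>pf cQ' d (real m) - zc - of_int z\<bar> < \<sigma> / 4"
        using density'[where c=cQ' and d=d and e="\<sigma>/4" and t=zc, OF d cQ'irr] sig by auto
      define k where "k = k0 + N * m"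
      have fq: "frac (Q k) = pf cQ' d (real m) - of_int z"
        unfolding k_def Qshift by (rule frac_near[OF mz]) (use sig 2 L2f in \<open>auto simp: zc_def\<close>)
      define u1 where "u1 = frac (Q k)"
      have u1: "L2 - 3 * \<sigma> / 4 < u1" "u1 < L2 - \<sigma> / 4"
        using mz[unfolded abs_less_iff] unfolding u1_def fq zc_def by linarith+
      have u2: "frac (Q k + D k) = u1 + \<sigma>"
        unfolding step[OF k_def] u1_def[symmetric] using u1 sig 2 L2f by (simp add: frac_eq)
      have p: "0 < u1" "u1 < L2" "L2 < u1 + \<sigma>" "u1 + \<sigma> < 1" using u1 sig 2 L2f by linarith+
      show False
        by (rule NEAR[of u1 "u1 + \<sigma>" k, OF p disjI1[OF conjI[OF u1_def u2[symmetric]]]])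
    next
      case 3
      define \<tau> where "\<tau> = 1 - \<sigma>"
      have tau: "0 < \<tau>" "\<tau> \<le> L2" using sig 3 unfolding \<tau>_def by auto
      define zc where "zc = L2 + \<tau> / 2"
      obtain m :: nat and z :: int where mz: "\<bar>pf cQ' d (real m) - zc - of_int z\<bar> < \<tau> / 4"
        using density'[where c=cQ' and d=d and e="\<tau>/4" and t=zc, OF d cQ'irr] tau by auto
      define k where "k = k0 + N * m"
      have fq: "frac (Q k) = pf cQ' d (real m) - of_int z"
        unfolding k_def Qshift by (rule frac_near[OF mz]) (use tau L2f in \<open>auto simp: zc_def\<close>)
      define u2 where "u2 = frac (Q k)"
      have u2: "L2 + \<tau> / 4 < u2" "u2 < L2 + 3 * \<tau> / 4"
        using mz[unfolded abs_less_iff] unfolding u2_def fq zc_def by linarith+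
      have i1: "(u2 + \<sigma>) - (u2 - \<tau>) \<in> \<int>" unfolding \<tau>_def by simp
      have i2: "0 \<le> u2 - \<tau>" "u2 - \<tau> < 1" using u2 tau L2f by linarith+
      have u1: "frac (Q k + D k) = u2 - \<tau>"
        unfolding step[OF k_def] u2_def[symmetric] frac_unique_iff using i1 i2 by blast
      have p: "0 < u2 - \<tau>" "u2 - \<tau> < L2" "L2 < u2" "u2 < 1" using u2 tau L2f by linarith+
      show False
        by (rule NEAR[of "u2 - \<tau>" u2 k, OF p disjI2[OF conjI[OF u2_def u1[symmetric]]]])
    qed
  qed
qed


end
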